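(* Let $R=\nabla\vdash l\to r$ be a standard nominal rule. Then $\mathcal{T}(\nabla,l)\Rightarrow\mathcal{T}(\nabla,r)$ is a CRS rule.
   Context: Nominal terms: $s,t ::= a \mid \pi\cdot X \mid [a]s \mid f\,s \mid (s_1,\ldots,s_n)$ over atoms, variables, function symbols with arities and finite-support permutations $\pi$ of atoms. A freshness context is a set of constraints $a\#X$. A nominal rule $\nabla\vdash l\to r$ has all variables of $r$ and $\nabla$ occurring in $l$. $\nabla\vdash t$ is closed if: (1) every atom occurrence $a$ in $t$ lies under an abstraction $[a]$; (2) if $\pi\cdot X$ is in the scope of an abstraction of $\pi(a)$ then every occurrence $\pi'\cdot X$ of $X$ in $t$ is in the scope of an abstraction of $\pi'(a)$, or $a\#X\in\nabla$; (3) for two occurrences $\pi_1\cdot X,\pi_2\cdot X$ and $a$ with $\pi_1(a)\neq\pi_2(a)$, if $a$ is not abstracted in one of the occurrences then $a\#X\in\nabla$. A rule is standard if $\nabla\vdash(l,r)$ is closed and $l$ has the form $f\,s$. CRS: meta-terms $a\mid Z(t_1,\dots,t_n)\mid[a]t\mid f\,t\mid(t_1,\dots,t_n)$ with meta-variables of fixed arity; a CRS rule is a pair $l\Rightarrow r$ of closed meta-terms (no free variables) with $l=f(s_1,\dots,s_n)$, all meta-variables of $r$ occurring in $l$, and meta-variables in $l$ occurring only in the form $Z(a_1,\dots,a_n)$ with $a_1,\dots,a_n$ pairwise distinct bound variables. Translation: $\Lambda_t(X)$ is the set of atoms $a$ such that some occurrence of $X$ in $t$ is in the scope of $[a]$.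 With a fixed total order on atoms, $\mathcal{T}(\nabla,t)$ is obtained from $t$ by replacing each occurrence $\pi\cdot X$ by $X(\pi\cdot xs)$, where $xs$ is the ascending list of $\{\pi^{-1}(a)\mid a\in\Lambda_t(X)\}\setminus\{a\mid a\#X\in\nabla\}$ and $\pi$ is applied elementwise; other constructs kept unchanged. In $\mathcal{T}(\nabla,l)$, $\Lambda_l$ is used, and in $\mathcal{T}(\nabla,r)$, $\Lambda_r$. *)

theory Defs
  imports Main "HOL-Combinatorics.Perm"
begin

datatype ('a, 'v, 'f) nterm =
    NAtom 'a
  | NSusp "'a perm" 'v
  | NAbs 'a "('a, 'v, 'f) nterm"
  | NFun 'f "('a, 'v, 'f) nterm"
  | NTup "('a, 'v, 'f) nterm list"

type_synonym ('a, 'v) fresh_ctx = "('a \<times> 'v) set"   (* (a, X) \<in> Nab means a # X *)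

primrec susp_occs :: "('a, 'v, 'f) nterm \<Rightarrow> ('a set \<times> 'a perm \<times> 'v) set" where
  "susp_occs (NAtom a) = {}"
| "susp_occs (NSusp \<pi> X) = {({}, \<pi>, X)}"
| "susp_occs (NAbs a t) = (\<lambda>(B, \<pi>, X). (insert a B, \<pi>, X)) ` susp_occs t"
| "susp_occs (NFun f t) = susp_occs t"
| "susp_occs (NTup ts) = \<Union> (set (map susp_occs ts))"

primrec atom_occs :: "('a, 'v, 'f) nterm \<Rightarrow> ('a set \<times> 'a) set" where
  "atom_occs (NAtom a) = {({}, a)}"
| "atom_occs (NSusp \<pi> X) = {}"
| "atom_occs (NAbs a t) = (\<lambda>(B, b). (insert a B, b)) ` atom_occs t"
| "atom_occs (NFun f t) = atom_occs t"
| "atom_occs (NTup ts) = \<Union> (set (map atom_occs ts))"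

definition nvars :: "('a, 'v, 'f) nterm \<Rightarrow> 'v set" where
  "nvars t = {X. \<exists>B \<pi>. (B, \<pi>, X) \<in> susp_occs t}"

definition Lam :: "('a, 'v, 'f) nterm \<Rightarrow> 'v \<Rightarrow> 'a set" where
  "Lam t X = {a. \<exists>B \<pi>. (B, \<pi>, X) \<in> susp_occs t \<and> a \<in> B}"

definition nclosed :: "('a, 'v) fresh_ctx \<Rightarrow> ('a, 'v, 'f) nterm \<Rightarrow> bool" where
  "nclosed Nab t \<longleftrightarrow>
     (\<forall>(B, a) \<in> atom_occs t. a \<in> B) \<and>
     (\<forall>(B, \<pi>, X) \<in> susp_occs t. \<forall>a. Perm.apply (\<pi>) a \<in> B \<longrightarrow>
        (\<forall>(B', \<pi>', X') \<in> susp_occs t. X' = X \<longrightarrow> Perm.apply (\<pi>') a \<in> B') \<or> (a, X) \<in> Nab) \<and>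
     (\<forall>(B1, \<pi>1, X1) \<in> susp_occs t. \<forall>(B2, \<pi>2, X2) \<in> susp_occs t. \<forall>a.
        X1 = X2 \<and> Perm.apply (\<pi>1) a \<noteq> Perm.apply (\<pi>2) a \<and> (Perm.apply (\<pi>1) a \<notin> B1 \<or> Perm.apply (\<pi>2) a \<notin> B2)
        \<longrightarrow> (a, X1) \<in> Nab)"

definition nominal_rule :: "('a, 'v) fresh_ctx \<Rightarrow> ('a, 'v, 'f) nterm \<Rightarrow> ('a, 'v, 'f) nterm \<Rightarrow> bool" where
  "nominal_rule Nab l r \<longleftrightarrow> nvars r \<subseteq> nvars l \<and> snd ` Nab \<subseteq> nvars l"

definition standard_rule :: "('a, 'v) fresh_ctx \<Rightarrow> ('a, 'v, 'f) nterm \<Rightarrow> ('a, 'v, 'f) nterm \<Rightarrow> bool" where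
  "standard_rule Nab l r \<longleftrightarrow> nominal_rule Nab l r \<and> nclosed Nab (NTup [l, r]) \<and> (\<exists>f s. l = NFun f s)"

datatype ('a, 'v, 'f) mterm =
    MAtom 'a
  | MVar 'v "('a, 'v, 'f) mterm list"
  | MAbs 'a "('a, 'v, 'f) mterm"
  | MFun 'f "('a, 'v, 'f) mterm"
  | MTup "('a, 'v, 'f) mterm list"

primrec matom_occs :: "('a, 'v, 'f) mterm \<Rightarrow> ('a set \<times> 'a) set" where
  "matom_occs (MAtom a) = {({}, a)}"
| "matom_occs (MVar Z ts) = \<Union> (set (map matom_occs ts))"
| "matom_occs (MAbs a t) = (\<lambda>(B, b). (insert a B, b)) ` matom_occs t"
| "matom_occs (MFun f t) = matom_occs t"
| "matom_occs (MTup ts) = \<Union> (set (map matom_occs ts))"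

primrec mvar_occs :: "('a, 'v, 'f) mterm \<Rightarrow> ('a set \<times> 'v \<times> ('a, 'v, 'f) mterm list) set" where
  "mvar_occs (MAtom a) = {}"
| "mvar_occs (MVar Z ts) = insert ({}, Z, ts) (\<Union> (set (map mvar_occs ts)))"
| "mvar_occs (MAbs a t) = (\<lambda>(B, Z, ts). (insert a B, Z, ts)) ` mvar_occs t"
| "mvar_occs (MFun f t) = mvar_occs t"
| "mvar_occs (MTup ts) = \<Union> (set (map mvar_occs ts))"

definition mvars :: "('a, 'v, 'f) mterm \<Rightarrow> 'v set" where
  "mvars t = {Z. \<exists>B ts. (B, Z, ts) \<in> mvar_occs t}"

definition mclosed :: "('a, 'v, 'f) mterm \<Rightarrow> bool" where
  "mclosed t \<longleftrightarrow> (\<forall>(B, a) \<in> matom_occs t. a \<in> B)"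

definition crs_rule :: "('a, 'v, 'f) mterm \<Rightarrow> ('a, 'v, 'f) mterm \<Rightarrow> bool" where
  "crs_rule l r \<longleftrightarrow>
     mclosed l \<and> mclosed r \<and>
     (\<exists>f s. l = MFun f s) \<and>
     mvars r \<subseteq> mvars l \<and>
     (\<forall>(B, Z, ts) \<in> mvar_occs l. \<exists>as. ts = map MAtom as \<and> distinct as \<and> set as \<subseteq> B) \<and>
     (\<comment> \<open>fixed arity of meta-variables\<close>
      \<forall>(B1, Z1, ts1) \<in> mvar_occs l \<union> mvar_occs r. \<forall>(B2, Z2, ts2) \<in> mvar_occs l \<union> mvar_occs r.
        Z1 = Z2 \<longrightarrow> length ts1 = length ts2)"

primrec trans_aux :: "('v \<Rightarrow> 'a::linorder set) \<Rightarrow> ('a, 'v) fresh_ctx \<Rightarrow> ('a, 'v, 'f) nterm \<Rightarrow> ('a, 'v, 'f) mterm" where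
  "trans_aux L Nab (NAtom a) = MAtom a"
| "trans_aux L Nab (NSusp \<pi> X) =
     MVar X (map (\<lambda>b. MAtom (Perm.apply (\<pi>) b))
       (sorted_list_of_set ((\<lambda>a. Perm.apply (inverse \<pi>) a) ` L X - {a. (a, X) \<in> Nab})))"
| "trans_aux L Nab (NAbs a t) = MAbs a (trans_aux L Nab t)"
| "trans_aux L Nab (NFun f t) = MFun f (trans_aux L Nab t)"
| "trans_aux L Nab (NTup ts) = MTup (map (trans_aux L Nab) ts)"

definition translate :: "('a::linorder, 'v) fresh_ctx \<Rightarrow> ('a, 'v, 'f) nterm \<Rightarrow> ('a, 'v, 'f) mterm" where
  "translate Nab t = trans_aux (Lam t) Nab t"

end

theory Submission
  imports Defs
begin

definition argl :: "('v \<Rightarrow> 'a::linorder set) \<Rightarrow> ('a, 'v) fresh_ctx \<Rightarrow> 'a perm \<Rightarrow> 'v \<Rightarrow> 'a list" where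
  "argl L N \<pi> X = sorted_list_of_set ((\<lambda>a. Perm.apply (inverse \<pi>) a) ` L X - {a. (a, X) \<in> N})"

lemma mvar_occs_trans:
  "(B, Z, ts) \<in> mvar_occs (trans_aux L N t) \<longleftrightarrow>
   (\<exists>\<pi>. (B, \<pi>, Z) \<in> susp_occs t \<and> ts = map (\<lambda>b. MAtom (Perm.apply \<pi> b)) (argl L N \<pi> Z))"
proof (induction t arbitrary: B)
  case (NAbs a t)
  then show ?case by (auto simp: image_iff Bex_def; force)
next
  case (NTup ts)
  then show ?case by auto
qed (auto simp: argl_def)

lemma matom_occs_trans:
  "(B, c) \<in> matom_occs (trans_aux L N t) \<longleftrightarrow>
   (B, c) \<in> atom_occs t \<or> (\<exists>\<pi> X. (B, \<pi>, X) \<in> susp_occs t \<and> c \<in> Perm.apply \<pi> ` set (argl L N \<pi> X))"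
proof (induction t arbitrary: B)
  case (NAbs a t)
  then show ?case by (auto simp: image_iff Bex_def; force)
next
  case (NTup ts)
  then show ?case by auto blast
qed (auto simp: argl_def)

lemma inv_app: "Perm.apply (inverse \<pi>) x = a \<longleftrightarrow> x = Perm.apply \<pi> a"
  by (metis apply_inverse bij_apply bij_inv_eq_iff)

lemma closed_c2:
  assumes "nclosed N t" "(B,\<pi>,X) \<in> susp_occs t" "Perm.apply \<pi> a \<in> B" "(B',\<pi>',X) \<in> susp_occs t"
  shows "Perm.apply \<pi>' a \<in> B' \<or> (a,X) \<in> N"
proof -
  have "\<forall>(B, \<pi>, X) \<in> susp_occs t. \<forall>a. Perm.apply (\<pi>) a \<in> B \<longrightarrow>
        (\<forall>(B', \<pi>', X') \<in> susp_occs t. X' = X \<longrightarrow> Perm.apply (\<pi>') a \<in> B') \<or> (a, X) \<in> N"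
    using assms(1) unfolding nclosed_def by (elim conjE)
  then have "(\<forall>(B', \<pi>', X') \<in> susp_occs t. X' = X \<longrightarrow> Perm.apply (\<pi>') a \<in> B') \<or> (a, X) \<in> N"
    using assms(2,3) by (drule_tac bspec) auto
  then show ?thesis using assms(4) by (auto dest: bspec)
qed

lemma closed_c3:
  assumes "nclosed N t" "(B1,\<pi>1,X) \<in> susp_occs t" "(B2,\<pi>2,X) \<in> susp_occs t"
    "Perm.apply \<pi>1 a \<noteq> Perm.apply \<pi>2 a" "Perm.apply \<pi>1 a \<notin> B1 \<or> Perm.apply \<pi>2 a \<notin> B2"
  shows "(a,X) \<in> N"
proof -
  have "\<forall>(B1, \<pi>1, X1) \<in> susp_occs t. \<forall>(B2, \<pi>2, X2) \<in> susp_occs t. \<forall>a.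
        X1 = X2 \<and> Perm.apply (\<pi>1) a \<noteq> Perm.apply (\<pi>2) a \<and> (Perm.apply (\<pi>1) a \<notin> B1 \<or> Perm.apply (\<pi>2) a \<notin> B2)
        \<longrightarrow> (a, X1) \<in> N"
    using assms(1) unfolding nclosed_def by (elim conjE)
  then show ?thesis using assms(2-5) by (drule_tac bspec) (auto dest: bspec)
qed

lemma closed_c1:
  assumes "nclosed N t" "(B,a) \<in> atom_occs t"
  shows "a \<in> B"
  using assms unfolding nclosed_def by (auto dest: bspec)

lemma argset_eq:
  assumes cl: "nclosed N t0" and sub: "susp_occs t \<subseteq> susp_occs t0"
    and occ: "(B,\<pi>,X) \<in> susp_occs t"
  shows "(\<lambda>a. Perm.apply (inverse \<pi>) a) ` Lam t X - {a. (a, X) \<in> N} = {a. (a,X) \<notin> N \<and> Perm.apply \<pi> a \<in> B}"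
proof (intro equalityI subsetI)
  fix a assume "a \<in> (\<lambda>a. Perm.apply (inverse \<pi>) a) ` Lam t X - {a. (a, X) \<in> N}"
  then obtain c B' \<pi>' where c: "a = Perm.apply (inverse \<pi>) c" "c \<in> B'" "(B',\<pi>',X) \<in> susp_occs t"
    and aN: "(a,X) \<notin> N"
    unfolding Lam_def by blast
  have pa: "Perm.apply \<pi> a = c" using c(1) inv_app by metis
  show "a \<in> {a. (a,X) \<notin> N \<and> Perm.apply \<pi> a \<in> B}"
  proof (rule ccontr)
    assume "a \<notin> {a. (a,X) \<notin> N \<and> Perm.apply \<pi> a \<in> B}"
    then have nB: "Perm.apply \<pi> a \<notin> B" using aN by blast
    have o1: "(B,\<pi>,X) \<in> susp_occs t0" "(B',\<pi>',X) \<in> susp_occs t0" using occ c(3) sub by auto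
    have eq: "Perm.apply \<pi> a = Perm.apply \<pi>' a"
      using closed_c3[OF cl o1(1) o1(2), of a] nB aN by blast
    have "Perm.apply \<pi>' a \<in> B'" using eq pa c(2) by simp
    then have "Perm.apply \<pi> a \<in> B \<or> (a,X) \<in> N" using closed_c2[OF cl o1(2) _ o1(1)] by blast
    then show False using nB aN by blast
  qed
next
  fix a assume a: "a \<in> {a. (a,X) \<notin> N \<and> Perm.apply \<pi> a \<in> B}"
  then have "Perm.apply \<pi> a \<in> Lam t X" using occ unfolding Lam_def by blast
  moreover have "a = Perm.apply (inverse \<pi>) (Perm.apply \<pi> a)" using inv_app by metis
  ultimately show "a \<in> (\<lambda>a. Perm.apply (inverse \<pi>) a) ` Lam t X - {a. (a, X) \<in> N}"
    using a by blast
qed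

lemma argset_uniform:
  assumes cl: "nclosed N t0" and o1: "(B1,\<pi>1,X) \<in> susp_occs t0" and o2: "(B2,\<pi>2,X) \<in> susp_occs t0"
  shows "{a. (a,X) \<notin> N \<and> Perm.apply \<pi>1 a \<in> B1} = {a. (a,X) \<notin> N \<and> Perm.apply \<pi>2 a \<in> B2}"
  using closed_c2[OF cl o1 _ o2] closed_c2[OF cl o2 _ o1] by blast

lemma set_sls_sub: "set (sorted_list_of_set S) \<subseteq> S"
  by (cases "finite S") auto

lemma argl_eq:
  assumes cl: "nclosed N t0" and sub: "susp_occs t \<subseteq> susp_occs t0"
    and occ: "(B,\<pi>,X) \<in> susp_occs t"
  shows "argl (Lam t) N \<pi> X = sorted_list_of_set {a. (a,X) \<notin> N \<and> Perm.apply \<pi> a \<in> B}"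
  unfolding argl_def using argset_eq[OF assms] by simp

lemma closed_part:
  assumes cl: "nclosed N t0" and sub: "susp_occs t \<subseteq> susp_occs t0" and suba: "atom_occs t \<subseteq> atom_occs t0"
  shows "mclosed (translate N t)"
  unfolding mclosed_def translate_def
proof (clarify)
  fix B c assume "(B, c) \<in> matom_occs (trans_aux (Lam t) N t)"
  then consider "(B, c) \<in> atom_occs t" | \<pi> X where "(B, \<pi>, X) \<in> susp_occs t" "c \<in> Perm.apply \<pi> ` set (argl (Lam t) N \<pi> X)"
    unfolding matom_occs_trans by blast
  then show "c \<in> B"
  proof cases
    case 1 then show ?thesis using closed_c1[OF cl] suba by blast
  next
    case 2
    then show ?thesis using argl_eq[OF cl sub 2(1)] set_sls_sub[of "{a. (a, X) \<notin> N \<and> Perm.apply \<pi> a \<in> B}"] by auto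
  qed
qed

theorem mainTheorem8:
  fixes Nab :: "('a::linorder, 'v) fresh_ctx"
    and l r :: "('a, 'v, 'f) nterm"
  assumes "standard_rule Nab l r"
  shows "crs_rule (translate Nab l) (translate Nab r)"
proof -
  let ?t0 = "NTup [l, r]"
  have cl: "nclosed Nab ?t0" and nr: "nominal_rule Nab l r" and lf: "\<exists>f s. l = NFun f s"
    using assms unfolding standard_rule_def by auto
  have sl: "susp_occs l \<subseteq> susp_occs ?t0" and sr: "susp_occs r \<subseteq> susp_occs ?t0" by auto
  have al: "atom_occs l \<subseteq> atom_occs ?t0" and ar: "atom_occs r \<subseteq> atom_occs ?t0" by auto
  have c1: "mclosed (translate Nab l)" by (rule closed_part[OF cl sl al])
  have c2: "mclosed (translate Nab r)" by (rule closed_part[OF cl sr ar])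
  have c3: "\<exists>f s. translate Nab l = MFun f s" using lf unfolding translate_def by auto
  have c4: "mvars (translate Nab r) \<subseteq> mvars (translate Nab l)"
  proof
    fix Z assume "Z \<in> mvars (translate Nab r)"
    then have "Z \<in> nvars r" unfolding mvars_def nvars_def translate_def mvar_occs_trans by blast
    then have "Z \<in> nvars l" using nr unfolding nominal_rule_def by blast
    then show "Z \<in> mvars (translate Nab l)" unfolding mvars_def nvars_def translate_def mvar_occs_trans by blast
  qed
  have c5: "\<forall>(B, Z, ts) \<in> mvar_occs (translate Nab l). \<exists>as. ts = map MAtom as \<and> distinct as \<and> set as \<subseteq> B"
  proof (clarify)
    fix B Z ts assume "(B, Z, ts) \<in> mvar_occs (translate Nab l)"
    then obtain \<pi> where occ: "(B, \<pi>, Z) \<in> susp_occs l"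
      and ts: "ts = map (\<lambda>b. MAtom (Perm.apply \<pi> b)) (argl (Lam l) Nab \<pi> Z)"
      unfolding translate_def mvar_occs_trans by blast
    let ?S = "{a. (a,Z) \<notin> Nab \<and> Perm.apply \<pi> a \<in> B}"
    have e: "argl (Lam l) Nab \<pi> Z = sorted_list_of_set ?S" by (rule argl_eq[OF cl sl occ])
    have inj: "inj (Perm.apply \<pi>)" by (meson apply_inj injI)
    show "\<exists>as. ts = map MAtom as \<and> distinct as \<and> set as \<subseteq> B"
    proof (intro exI conjI)
      show "ts = map MAtom (map (Perm.apply \<pi>) (sorted_list_of_set ?S))" using ts e by simp
      show "distinct (map (Perm.apply \<pi>) (sorted_list_of_set ?S))"
        using inj by (simp add: distinct_map inj_on_def)
      show "set (map (Perm.apply \<pi>) (sorted_list_of_set ?S)) \<subseteq> B"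
        using set_sls_sub[of ?S] by auto
    qed
  qed
  have info: "\<exists>\<pi>. (B, \<pi>, Z) \<in> susp_occs ?t0 \<and>
      length ts = length (sorted_list_of_set {a. (a,Z) \<notin> Nab \<and> Perm.apply \<pi> a \<in> B})"
    if "(B, Z, ts) \<in> mvar_occs (translate Nab l) \<union> mvar_occs (translate Nab r)" for B Z ts
  proof -
    from that consider "(B, Z, ts) \<in> mvar_occs (translate Nab l)" | "(B, Z, ts) \<in> mvar_occs (translate Nab r)" by blast
    then show ?thesis
    proof cases
      case 1
      then obtain \<pi> where occ: "(B, \<pi>, Z) \<in> susp_occs l"
        and ts: "ts = map (\<lambda>b. MAtom (Perm.apply \<pi> b)) (argl (Lam l) Nab \<pi> Z)"
        unfolding translate_def mvar_occs_trans by blast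
      show ?thesis using occ sl ts argl_eq[OF cl sl occ] by auto
    next
      case 2
      then obtain \<pi> where occ: "(B, \<pi>, Z) \<in> susp_occs r"
        and ts: "ts = map (\<lambda>b. MAtom (Perm.apply \<pi> b)) (argl (Lam r) Nab \<pi> Z)"
        unfolding translate_def mvar_occs_trans by blast
      show ?thesis using occ sr ts argl_eq[OF cl sr occ] by auto
    qed
  qed
  have c6: "\<forall>(B1, Z1, ts1) \<in> mvar_occs (translate Nab l) \<union> mvar_occs (translate Nab r).
      \<forall>(B2, Z2, ts2) \<in> mvar_occs (translate Nab l) \<union> mvar_occs (translate Nab r).
        Z1 = Z2 \<longrightarrow> length ts1 = length ts2"
  proof (clarify)
    fix B1 Z1 ts1 B2 ts2
    assume a1: "(B1, Z1, ts1) \<in> mvar_occs (translate Nab l) \<union> mvar_occs (translate Nab r)"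
      and a2: "(B2, Z1, ts2) \<in> mvar_occs (translate Nab l) \<union> mvar_occs (translate Nab r)"
    obtain \<pi>1 where p1: "(B1, \<pi>1, Z1) \<in> susp_occs ?t0"
      "length ts1 = length (sorted_list_of_set {a. (a,Z1) \<notin> Nab \<and> Perm.apply \<pi>1 a \<in> B1})"
      using info[OF a1] by blast
    obtain \<pi>2 where p2: "(B2, \<pi>2, Z1) \<in> susp_occs ?t0"
      "length ts2 = length (sorted_list_of_set {a. (a,Z1) \<notin> Nab \<and> Perm.apply \<pi>2 a \<in> B2})"
      using info[OF a2] by blast
    show "length ts1 = length ts2" using p1 p2 argset_uniform[OF cl p1(1) p2(1)] by simp
  qed
  show ?thesis unfolding crs_rule_def using c1 c2 c3 c4 c5 c6 by blast
qed

end
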